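(* Let $\mathbf e=(1,1)$, $X=[-\frac34,\frac54]^2$, $Y=[-10,10]^2$, and for $\rho>0$ define on $X\times Y$ $$\psi_\rho(x,y)=\Big(\frac{\|x\|^2}{2}-1\Big)^2-\frac{\|y-\mathbf e\|^2}{2}+\frac{x^\top y}{2}-\frac\rho2\big[\mathbf e^\top y-\|x\|^2\big]_+^2 .$$ For every $\rho>1$, the problem $\min_{x\in X}\max_{y\in Y}\psi_\rho(x,y)$ has a unique first-order minimax (stationary) point $(x,y)\in X\times Y$, i.e. a unique point satisfying $0\in\nabla_x\psi_\rho(x,y)+\mathcal N_X(x)$ and $0\in-\nabla_y\psi_\rho(x,y)+\mathcal N_Y(y)$, namely $$(x,y)=\Big(-\tfrac34\mathbf e,\ \tfrac{10+18\rho}{16+32\rho}\mathbf e\Big),$$ which converges to $(-\frac34\mathbf e,\frac9{16}\mathbf e)$ as $\rho\to\infty$.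
   Context: $[z]_+=\max\{z,0\}$. $\mathcal N_C(z)=\{v:\langle v,z'-z\rangle\le0\ \forall z'\in C\}$ is the normal cone of a convex set $C$ at $z\in C$. *)

theory Defs
  imports "HOL-Analysis.Analysis"
begin

definition pos_part :: "real \<Rightarrow> real" where
  "pos_part z = max z 0"

definition normal_cone :: "'a::real_inner set \<Rightarrow> 'a \<Rightarrow> 'a set" where
  "normal_cone C z = {v. \<forall>z'\<in>C. inner v (z' - z) \<le> 0}"

definition e_vec :: "real ^ 2" where
  "e_vec = vector [1, 1]"

definition X_set :: "(real ^ 2) set" where
  "X_set = {x. \<forall>i. -(3/4) \<le> x $ i \<and> x $ i \<le> 5/4}"

definition Y_set :: "(real ^ 2) set" where
  "Y_set = {y. \<forall>i. -10 \<le> y $ i \<and> y $ i \<le> 10}"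

definition psi :: "real \<Rightarrow> real ^ 2 \<Rightarrow> real ^ 2 \<Rightarrow> real" where
  "psi \<rho> x y = ((norm x)\<^sup>2 / 2 - 1)\<^sup>2 - (norm (y - e_vec))\<^sup>2 / 2 + inner x y / 2
      - \<rho> / 2 * (pos_part (inner e_vec y - (norm x)\<^sup>2))\<^sup>2"

definition is_gradient :: "('a::real_inner \<Rightarrow> real) \<Rightarrow> 'a \<Rightarrow> 'a \<Rightarrow> bool" where
  "is_gradient f g z \<longleftrightarrow> (f has_derivative (\<lambda>h. inner g h)) (at z)"

definition minimax_stationary :: "real \<Rightarrow> real ^ 2 \<Rightarrow> real ^ 2 \<Rightarrow> bool" where
  "minimax_stationary \<rho> x y \<longleftrightarrow> x \<in> X_set \<and> y \<in> Y_set \<and>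
     (\<exists>gx gy. is_gradient (\<lambda>x'. psi \<rho> x' y) gx x \<and> is_gradient (\<lambda>y'. psi \<rho> x y') gy y \<and>
        (\<exists>v\<in>normal_cone X_set x. gx + v = 0) \<and>
        (\<exists>w\<in>normal_cone Y_set y. - gy + w = 0))"

end

theory Submission
  imports Defs "HOL-Real_Asymp.Real_Asymp"
begin


lemma pos2_deriv: "((\<lambda>t. (pos_part t)\<^sup>2) has_real_derivative (2 * pos_part t)) (at t)"
proof (cases "t = 0")
  case True
  have "((\<lambda>h. ((pos_part (0 + h))\<^sup>2 - (pos_part 0)\<^sup>2) / h) \<longlongrightarrow> 0) (at 0)"
  proof (rule Lim_transform_eventually)
    show "((\<lambda>h::real. max h 0) \<longlongrightarrow> 0) (at 0)"
    proof -
      have "((\<lambda>h. max h 0) \<longlongrightarrow> max 0 (0::real)) (at 0)" by (intro tendsto_intros)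
      then show ?thesis by simp
    qed
    show "\<forall>\<^sub>F h in at 0. max h 0 = ((pos_part (0 + h))\<^sup>2 - (pos_part 0)\<^sup>2) / h"
      unfolding eventually_at_filter
      by (auto simp: pos_part_def max_def power2_eq_square)
  qed
  then show ?thesis using True by (simp add: DERIV_def pos_part_def)
next
  case False
  show ?thesis
  proof (cases "t > 0")
    case True
    have d: "((\<lambda>t. t\<^sup>2) has_real_derivative (2 * t)) (at t)"
      using DERIV_pow[of 2 t] by simp
    have ev: "\<forall>\<^sub>F s in nhds t. (pos_part s)\<^sup>2 = s\<^sup>2"
    proof -
      have "eventually (\<lambda>s. s \<in> {0<..}) (nhds t)" by (rule eventually_nhds_in_open) (use True in auto)
      then show ?thesis by (rule eventually_mono) (auto simp: pos_part_def)
    qed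
    have "2 * pos_part t = 2 * t" using True by (simp add: pos_part_def)
    then show ?thesis using DERIV_cong_ev[OF refl ev, of "2 * pos_part t" "2 * t"] d by simp
  next
    case False2: False
    have "t < 0" using False False2 by linarith
    have d: "((\<lambda>t. 0) has_real_derivative 0) (at t)" by simp
    have ev: "\<forall>\<^sub>F s in nhds t. (pos_part s)\<^sup>2 = 0"
    proof -
      have "eventually (\<lambda>s. s \<in> {..<0}) (nhds t)" by (rule eventually_nhds_in_open) (use \<open>t<0\<close> in auto)
      then show ?thesis by (rule eventually_mono) (auto simp: pos_part_def)
    qed
    have "2 * pos_part t = 0" using \<open>t<0\<close> by (simp add: pos_part_def)
    then show ?thesis using DERIV_cong_ev[OF refl ev, of "2 * pos_part t" 0] d by simp
  qed
qed

lemma pos2_has_derivative: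
  assumes "(g has_derivative g') (at x)"
  shows "((\<lambda>x. (pos_part (g x))\<^sup>2) has_derivative (\<lambda>h. 2 * pos_part (g x) * g' h)) (at x)"
proof -
  have "((\<lambda>t. (pos_part t)\<^sup>2) has_derivative (*) (2 * pos_part (g x))) (at (g x))"
    using pos2_deriv[of "g x"] unfolding has_field_derivative_def .
  from has_derivative_compose[OF assms this] show ?thesis by (simp add: mult.assoc)
qed

lemma grad_unique:
  assumes "is_gradient f g z" "is_gradient f g' z"
  shows "g = g'"
proof -
  have "(\<lambda>h. inner g h) = (\<lambda>h. inner g' h)"
    using has_derivative_unique assms unfolding is_gradient_def by blast
  then have "inner g (g - g') = inner g' (g - g')" by (rule fun_cong)
  then have "inner (g - g') (g - g') = 0" by (simp add: inner_diff_left)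
  then show ?thesis by simp
qed

lemma comp_inner: "inner (a::real^2) b = a$1*b$1 + a$2*b$2"
  by (simp add: inner_vec_def sum_2)

lemma e_comp: "e_vec$1 = 1" "e_vec$2 = 1"
  by (simp_all add: e_vec_def)

lemma grad_x:
  "is_gradient (\<lambda>x'. psi \<rho> x' y)
     ((inner x x - 2 + 2*\<rho>*pos_part (inner e_vec y - inner x x)) *\<^sub>R x + (1/2) *\<^sub>R y) x"
proof -
  define C where "C = (norm (y - e_vec))\<^sup>2 / 2"
  define P where "P = pos_part (inner e_vec y - inner x x)"
  have F: "(\<lambda>x'. psi \<rho> x' y) = (\<lambda>x'. (inner x' x' * (1/2) - 1)^2 - C + inner x' y * (1/2)
      - (\<rho>/2) * (pos_part (inner e_vec y - inner x' x'))\<^sup>2)"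
    unfolding psi_def C_def power2_norm_eq_inner[symmetric] by (simp add: fun_eq_iff)
  have Q: "((\<lambda>x'. inner x' x') has_derivative (\<lambda>h. inner x h + inner h x)) (at x)"
    by (rule has_derivative_inner[OF has_derivative_ident has_derivative_ident])
  have A: "((\<lambda>x'. inner x' x' * (1/2) - 1) has_derivative (\<lambda>h. (inner x h + inner h x) * (1/2) - 0)) (at x)"
    by (rule has_derivative_diff[OF has_derivative_mult_left[OF Q] has_derivative_const])
  have A2: "((\<lambda>x'. (inner x' x' * (1/2) - 1)^2) has_derivative
      (\<lambda>h. of_nat 2 * ((inner x h + inner h x) * (1/2) - 0) * (inner x x * (1/2) - 1)^(2-1))) (at x)"
    by (rule has_derivative_power[OF A])
  have B: "((\<lambda>x'. inner x' y * (1/2)) has_derivative (\<lambda>h. inner h y * (1/2))) (at x)"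
    by (rule has_derivative_mult_left[OF has_derivative_inner_left[OF has_derivative_ident]])
  have R: "((\<lambda>x'. inner e_vec y - inner x' x') has_derivative (\<lambda>h. 0 - (inner x h + inner h x))) (at x)"
    by (rule has_derivative_diff[OF has_derivative_const Q])
  have R2: "((\<lambda>x'. (\<rho>/2) * (pos_part (inner e_vec y - inner x' x'))\<^sup>2) has_derivative
      (\<lambda>h. (\<rho>/2) * (2 * P * (0 - (inner x h + inner h x))))) (at x)"
    unfolding P_def by (rule has_derivative_mult_right[OF pos2_has_derivative[OF R]])
  have D: "((\<lambda>x'. psi \<rho> x' y) has_derivative (\<lambda>h.
      of_nat 2 * ((inner x h + inner h x) * (1/2) - 0) * (inner x x * (1/2) - 1)^(2-1) - 0
      + inner h y * (1/2) - (\<rho>/2) * (2 * P * (0 - (inner x h + inner h x))))) (at x)"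
    unfolding F
    by (rule has_derivative_diff[OF has_derivative_add[OF has_derivative_diff[OF A2 has_derivative_const] B] R2])
  show ?thesis
    unfolding is_gradient_def P_def[symmetric]
    apply (rule has_derivative_eq_rhs[OF D])
    apply (rule ext)
    apply (simp only: comp_inner vector_minus_component vector_add_component vector_scaleR_component e_comp diff_zero power_one_right)
    apply (simp add: algebra_simps)
    done
qed

lemma grad_y:
  "is_gradient (\<lambda>y'. psi \<rho> x y')
     (e_vec - y + (1/2) *\<^sub>R x - (\<rho> * pos_part (inner e_vec y - inner x x)) *\<^sub>R e_vec) y"
proof -
  define C where "C = ((norm x)\<^sup>2 / 2 - 1)\<^sup>2"
  define P where "P = pos_part (inner e_vec y - inner x x)"
  have F: "(\<lambda>y'. psi \<rho> x y') = (\<lambda>y'. C - inner (y' - e_vec) (y' - e_vec) * (1/2) + inner x y' * (1/2)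
      - (\<rho>/2) * (pos_part (inner e_vec y' - inner x x))\<^sup>2)"
    unfolding psi_def C_def power2_norm_eq_inner by (simp add: fun_eq_iff)
  have Q0: "((\<lambda>y'. y' - e_vec) has_derivative (\<lambda>h. h - 0)) (at y)"
    by (rule has_derivative_diff[OF has_derivative_ident has_derivative_const])
  have Q: "((\<lambda>y'. inner (y' - e_vec) (y' - e_vec)) has_derivative
      (\<lambda>h. inner (y - e_vec) (h - 0) + inner (h - 0) (y - e_vec))) (at y)"
    by (rule has_derivative_inner[OF Q0 Q0])
  have B: "((\<lambda>y'. inner x y' * (1/2)) has_derivative (\<lambda>h. inner x h * (1/2))) (at y)"
    by (rule has_derivative_mult_left[OF has_derivative_inner_right[OF has_derivative_ident]])
  have R: "((\<lambda>y'. inner e_vec y' - inner x x) has_derivative (\<lambda>h. inner e_vec h - 0)) (at y)"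
    by (rule has_derivative_diff[OF has_derivative_inner_right[OF has_derivative_ident] has_derivative_const])
  have R2: "((\<lambda>y'. (\<rho>/2) * (pos_part (inner e_vec y' - inner x x))\<^sup>2) has_derivative
      (\<lambda>h. (\<rho>/2) * (2 * P * (inner e_vec h - 0)))) (at y)"
    unfolding P_def by (rule has_derivative_mult_right[OF pos2_has_derivative[OF R]])
  have D: "((\<lambda>y'. psi \<rho> x y') has_derivative (\<lambda>h.
      0 - (inner (y - e_vec) (h - 0) + inner (h - 0) (y - e_vec)) * (1/2) + inner x h * (1/2)
      - (\<rho>/2) * (2 * P * (inner e_vec h - 0)))) (at y)"
    unfolding F
    by (rule has_derivative_diff[OF has_derivative_add[OF has_derivative_diff[OF has_derivative_const has_derivative_mult_left[OF Q]] B] R2])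
  show ?thesis
    unfolding is_gradient_def P_def[symmetric]
    apply (rule has_derivative_eq_rhs[OF D])
    apply (rule ext)
    apply (simp only: comp_inner vector_minus_component vector_add_component vector_scaleR_component e_comp diff_zero)
    apply (simp add: algebra_simps)
    done
qed




lemma both_false:
  fixes u q a :: real
  assumes "a = 2 + u - 2*u^2" "q < a" "3*q > 2*a" "u*(2*u^2 - 7/4 + q) + (2-q)/4 = 0"
  shows False
proof (cases "u < 1/4")
  case True
  have p: "(a - q)*(1/4 - u) > 0" using True assms by simp
  have "u*(2*u^2 - 7/4 + q) + (2-q)/4 = 3/2*u^2 + (a - q)*(1/4 - u)"
    unfolding assms(1) power2_eq_square power3_eq_cube by (simp add: field_simps)
  moreover have "3/2*u^2 \<ge> 0" by simp
  ultimately show False using p assms(4) by linarith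
next
  case False
  have p: "(q - 2*a/3)*(u - 1/4) \<ge> 0" using False assms by simp
  have "u*(2*u^2 - 7/4 + q) + (2-q)/4 = 2/3*u^3 + ((u - 7/24)^2 + (1/6 - 49/576)) + (q - 2*a/3)*(u - 1/4)"
    unfolding assms(1) power2_eq_square power3_eq_cube by (simp add: field_simps)
  moreover have "u^3 \<ge> 0" using False by simp
  moreover have "(u - 7/24)^2 \<ge> 0" by simp
  ultimately show False using p assms(4) by linarith
qed

lemma mixed_false:
  fixes u q a :: real
  assumes "a = 17/16 + u/2 - u^2" "q < a" "3*q > 2*a" "u*(9/16 + u^2 - 7/4 + q) + (2-q)/4 = 0"
  shows False
proof (cases "u < 1/4")
  case True
  have p: "(a - q)*(1/4 - u) > 0" using True assms by simp
  have "u*(9/16 + u^2 - 7/4 + q) + (2-q)/4 = 3/4*(u - 1/6)^2 + (15/64 - 1/48) + (a - q)*(1/4 - u)"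
    unfolding assms(1) power2_eq_square power3_eq_cube by (simp add: field_simps)
  moreover have "(u - 1/6)^2 \<ge> 0" by simp
  ultimately show False using p assms(4) by linarith
next
  case False
  have p: "(q - 2*a/3)*(u - 1/4) \<ge> 0" using False assms by simp
  have "u*(9/16 + u^2 - 7/4 + q) + (2-q)/4 = 1/3*u^3 + (1/2*(u - 9/16)^2 + (31/96 - 81/512)) + (q - 2*a/3)*(u - 1/4)"
    unfolding assms(1) power2_eq_square power3_eq_cube by (simp add: field_simps)
  moreover have "u^3 \<ge> 0" using False by simp
  moreover have "(u - 9/16)^2 \<ge> 0" by simp
  ultimately show False using p assms(4) by linarith
qed

lemma y_interior:
  fixes h y x s \<rho> yo :: real
  assumes "h = -(y - 1) + x/2 - \<rho>* s" "h*(10 - y) \<le> 0" "h*(-10 - y) \<le> 0"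
    "-10 \<le> y" "y \<le> 10" "-3/4 \<le> x" "x \<le> 5/4" "\<rho> > 1" "s \<ge> 0"
    "y = -10 \<Longrightarrow> s = 0"
  shows "h = 0"
proof -
  consider "y = 10" | "y = -10" | "-10 < y \<and> y < 10" using assms by linarith
  then show ?thesis
  proof cases
    case 1
    then have "h \<ge> 0" using assms(3) by (simp add: mult_le_0_iff)
    moreover have "\<rho>* s \<ge> 0" using assms by simp
    ultimately show ?thesis using assms 1 by linarith
  next
    case 2
    then have "h \<le> 0" using assms(2) by (simp add: mult_le_0_iff)
    then show ?thesis using assms 2 by simp
  next
    case 3
    then show ?thesis using assms(2,3) by (auto simp: mult_le_0_iff)
  qed
qed

lemma x_side:
  fixes g x :: real
  assumes "g*(5/4 - x) \<ge> 0" "g*(-3/4 - x) \<ge> 0" "-3/4 \<le> x" "x \<le> 5/4" "x \<noteq> 5/4"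
  shows "x = -3/4 \<or> g = 0"
  using assms by (auto simp: zero_le_mult_iff)

lemma scalar_core:
  fixes \<rho> x1 x2 y1 y2 N s g1 g2 h1 h2 :: real
  assumes r: "\<rho> > 1"
    and bx: "-3/4 \<le> x1" "x1 \<le> 5/4" "-3/4 \<le> x2" "x2 \<le> 5/4"
    and by': "-10 \<le> y1" "y1 \<le> 10" "-10 \<le> y2" "y2 \<le> 10"
    and N: "N = x1*x1 + x2*x2" and s: "s = pos_part (y1 + y2 - N)"
    and g1: "g1 = (N - 2 + 2*\<rho>* s)*x1 + y1/2" and g2: "g2 = (N - 2 + 2*\<rho>* s)*x2 + y2/2"
    and h1: "h1 = -(y1 - 1) + x1/2 - \<rho>* s" and h2: "h2 = -(y2 - 1) + x2/2 - \<rho>* s"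
    and cg1: "g1*(5/4 - x1) \<ge> 0" "g1*(-3/4 - x1) \<ge> 0"
    and cg2: "g2*(5/4 - x2) \<ge> 0" "g2*(-3/4 - x2) \<ge> 0"
    and ch1: "h1*(10 - y1) \<le> 0" "h1*(-10 - y1) \<le> 0"
    and ch2: "h2*(10 - y2) \<le> 0" "h2*(-10 - y2) \<le> 0"
  shows "x1 = -3/4 \<and> x2 = -3/4 \<and> y1 = (10 + 18*\<rho>)/(16 + 32*\<rho>) \<and> y2 = (10 + 18*\<rho>)/(16 + 32*\<rho>)"
proof -
  have s0: "s \<ge> 0" using s by (simp add: pos_part_def)
  have N0: "N \<ge> 0" using N by simp
  have sz1: "s = 0" if "y1 = -10"
  proof -
    have "y1 + y2 - N \<le> 0" using that by' N0 by linarith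
    then show ?thesis using s by (simp add: pos_part_def)
  qed
  have sz2: "s = 0" if "y2 = -10"
  proof -
    have "y1 + y2 - N \<le> 0" using that by' N0 by linarith
    then show ?thesis using s by (simp add: pos_part_def)
  qed
  have "h1 = 0" by (rule y_interior[OF h1 ch1 by'(1,2) bx(1,2) r s0 sz1])
  then have y1: "y1 = 1 + x1/2 - \<rho>* s" using h1 by linarith
  have "h2 = 0" by (rule y_interior[OF h2 ch2 by'(3,4) bx(3,4) r s0 sz2])
  then have y2: "y2 = 1 + x2/2 - \<rho>* s" using h2 by linarith
  define a where "a = 2 + x1/2 + x2/2 - N"
  have "(x1 + 3/4)*(5/4 - x1) \<ge> 0" "(x2 + 3/4)*(5/4 - x2) \<ge> 0" using bx by simp_all
  then have "x1*x1 \<le> x1/2 + 15/16" "x2*x2 \<le> x2/2 + 15/16" by (simp_all add: algebra_simps)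
  then have a8: "a \<ge> 1/8" unfolding a_def N by linarith
  have sa: "s = pos_part (a - 2*\<rho>* s)" using s y1 y2 unfolding a_def by (simp add: algebra_simps)
  have spos: "s > 0"
  proof (rule ccontr)
    assume "\<not> s > 0"
    then have "s = 0" using s0 by simp
    then show False using sa a8 by (simp add: pos_part_def)
  qed
  then have sa2: "s = a - 2*\<rho>* s" using sa by (simp add: pos_part_def max_def split: if_splits)
  define q where "q = 2*\<rho>* s"
  have qa: "q < a" using sa2 spos q_def by linarith
  have "\<rho>* s > s" using r spos by simp
  then have q23: "3*q > 2*a" using sa2 q_def by linarith
  have q0: "q > 0" using r spos q_def by simp
  have G1: "g1 = x1*(N - 7/4 + q) + (2 - q)/4" unfolding g1 y1 q_def by (simp add: field_simps)
  have G2: "g2 = x2*(N - 7/4 + q) + (2 - q)/4" unfolding g2 y2 q_def by (simp add: field_simps)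
  have n1: "x1 \<noteq> 5/4"
  proof
    assume e: "x1 = 5/4"
    then have "g1 \<le> 0" using cg1 by (simp add: zero_le_mult_iff)
    moreover have "N \<ge> 25/16" using N e by simp
    ultimately show False using G1 e q0 by (simp add: field_simps)
  qed
  have n2: "x2 \<noteq> 5/4"
  proof
    assume e: "x2 = 5/4"
    then have "g2 \<le> 0" using cg2 by (simp add: zero_le_mult_iff)
    moreover have "N \<ge> 25/16" using N e by simp
    ultimately show False using G2 e q0 by (simp add: field_simps)
  qed
  have o1: "x1 = -3/4 \<or> g1 = 0" by (rule x_side[OF cg1 bx(1,2) n1])
  have o2: "x2 = -3/4 \<or> g2 = 0" by (rule x_side[OF cg2 bx(3,4) n2])
  have xs: "x1 = -3/4 \<and> x2 = -3/4"
  proof (rule ccontr)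
    assume nx: "\<not> (x1 = -3/4 \<and> x2 = -3/4)"
    consider "x1 = -3/4" "x2 \<noteq> -3/4" | "x1 \<noteq> -3/4" "x2 = -3/4" | "x1 \<noteq> -3/4" "x2 \<noteq> -3/4"
      using nx by blast
    then show False
    proof cases
      case 1
      then have "g2 = 0" using o2 by simp
      then show False
        using mixed_false[of a x2 q] G2 N 1 qa q23 unfolding a_def
        by (simp add: algebra_simps power2_eq_square)
    next
      case 2
      then have "g1 = 0" using o1 by simp
      then show False
        using mixed_false[of a x1 q] G1 N 2 qa q23 unfolding a_def
        by (simp add: algebra_simps power2_eq_square)
    next
      case 3
      then have z: "g1 = 0" "g2 = 0" using o1 o2 by simp_all
      have c: "N - 7/4 + q \<noteq> 0"
      proof
        assume "N - 7/4 + q = 0"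
        then have "q = 2" using z G1 by simp
        then show False using \<open>N - 7/4 + q = 0\<close> N0 by simp
      qed
      have "(x1 - x2)*(N - 7/4 + q) = g1 - g2" unfolding G1 G2 by (simp add: field_simps)
      then have "(x1 - x2)*(N - 7/4 + q) = 0" using z by simp
      then have e: "x2 = x1" using c by simp
      show False
        using both_false[of a x1 q] G1 N e z qa q23 unfolding a_def
        by (simp add: algebra_simps power2_eq_square)
    qed
  qed
  then have "a = 1/8" unfolding a_def N by simp
  then have "s = 1/(8*(1 + 2*\<rho>))" using sa2 r by (simp add: field_simps)
  then have "\<rho>* s = \<rho>/(8 + 16*\<rho>)" by (simp add: algebra_simps)
  moreover have "(10 + 18*\<rho>)/(16 + 32*\<rho>) = 5/8 - \<rho>/(8 + 16*\<rho>)" using r by (simp add: field_simps)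
  ultimately show ?thesis using xs y1 y2 by simp
qed


lemma box_cond:
  assumes "\<forall>z\<in>{z. \<forall>i. lo \<le> z$i \<and> z$i \<le> hi}. inner (G::real^2) (z - x) \<le> 0"
    "x \<in> {z. \<forall>i. lo \<le> z$i \<and> z$i \<le> hi}"
  shows "G$1*(lo - x$1) \<le> 0" "G$1*(hi - x$1) \<le> 0" "G$2*(lo - x$2) \<le> 0" "G$2*(hi - x$2) \<le> 0"
proof -
  have b: "lo \<le> x$1" "x$1 \<le> hi" "lo \<le> x$2" "x$2 \<le> hi" using assms(2) by auto
  have "(vector [lo, x$2] :: real^2) \<in> {z. \<forall>i. lo \<le> z$i \<and> z$i \<le> hi}" using b by (simp add: forall_2)
  then have "inner G (vector [lo, x$2] - x) \<le> 0" using assms(1) by blast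
  then show "G$1*(lo - x$1) \<le> 0" by (simp add: comp_inner)
  have "(vector [hi, x$2] :: real^2) \<in> {z. \<forall>i. lo \<le> z$i \<and> z$i \<le> hi}" using b by (simp add: forall_2)
  then have "inner G (vector [hi, x$2] - x) \<le> 0" using assms(1) by blast
  then show "G$1*(hi - x$1) \<le> 0" by (simp add: comp_inner)
  have "(vector [x$1, lo] :: real^2) \<in> {z. \<forall>i. lo \<le> z$i \<and> z$i \<le> hi}" using b by (simp add: forall_2)
  then have "inner G (vector [x$1, lo] - x) \<le> 0" using assms(1) by blast
  then show "G$2*(lo - x$2) \<le> 0" by (simp add: comp_inner)
  have "(vector [x$1, hi] :: real^2) \<in> {z. \<forall>i. lo \<le> z$i \<and> z$i \<le> hi}" using b by (simp add: forall_2)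
  then have "inner G (vector [x$1, hi] - x) \<le> 0" using assms(1) by blast
  then show "G$2*(hi - x$2) \<le> 0" by (simp add: comp_inner)
qed

lemma stationary_iff:
  assumes r: "\<rho> > 1"
  shows "minimax_stationary \<rho> x y \<longleftrightarrow>
    x = (-(3/4)) *\<^sub>R e_vec \<and> y = ((10 + 18 * \<rho>) / (16 + 32 * \<rho>)) *\<^sub>R e_vec"
proof -
  define s where "s = pos_part (inner e_vec y - inner x x)"
  define Gx where "Gx = (inner x x - 2 + 2*\<rho>* s) *\<^sub>R x + (1/2) *\<^sub>R y"
  define Gy where "Gy = e_vec - y + (1/2) *\<^sub>R x - (\<rho> * s) *\<^sub>R e_vec"
  define Yv where "Yv = (10 + 18 * \<rho>) / (16 + 32 * \<rho>)"
  have gX: "is_gradient (\<lambda>x'. psi \<rho> x' y) Gx x" unfolding Gx_def s_def by (rule grad_x)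
  have gY: "is_gradient (\<lambda>y'. psi \<rho> x y') Gy y" unfolding Gy_def s_def by (rule grad_y)
  have Gx1: "Gx$1 = (x$1*x$1 + x$2*x$2 - 2 + 2*\<rho>* s)*x$1 + y$1/2"
    and Gx2: "Gx$2 = (x$1*x$1 + x$2*x$2 - 2 + 2*\<rho>* s)*x$2 + y$2/2"
    unfolding Gx_def by (simp_all add: comp_inner)
  have Gy1: "Gy$1 = -(y$1 - 1) + x$1/2 - \<rho> * s"
    and Gy2: "Gy$2 = -(y$2 - 1) + x$2/2 - \<rho> * s"
    unfolding Gy_def by (simp_all add: e_comp)
  have sdef: "s = pos_part (y$1 + y$2 - (x$1*x$1 + x$2*x$2))"
    unfolding s_def by (simp add: comp_inner e_comp)
  show ?thesis
  proof
    assume "minimax_stationary \<rho> x y"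
    then obtain gx gy v w where xX: "x \<in> X_set" and yY: "y \<in> Y_set"
      and gx: "is_gradient (\<lambda>x'. psi \<rho> x' y) gx x" and gy: "is_gradient (\<lambda>y'. psi \<rho> x y') gy y"
      and v: "v \<in> normal_cone X_set x" "gx + v = 0"
      and w: "w \<in> normal_cone Y_set y" "- gy + w = 0"
      unfolding minimax_stationary_def by blast
    have "gx = Gx" using grad_unique[OF gx gX] .
    then have "v = - Gx" using v(2) by (simp add: eq_neg_iff_add_eq_0 add.commute)
    then have vX: "\<forall>z\<in>X_set. inner (- Gx) (z - x) \<le> 0" using v(1) unfolding normal_cone_def by simp
    have "gy = Gy" using grad_unique[OF gy gY] .
    then have "w = Gy" using w(2) by simp
    then have wY: "\<forall>z\<in>Y_set. inner Gy (z - y) \<le> 0" using w(1) unfolding normal_cone_def by simp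
    note bX = box_cond[OF vX[unfolded X_set_def] xX[unfolded X_set_def]]
    note bY = box_cond[OF wY[unfolded Y_set_def] yY[unfolded Y_set_def]]
    have xb: "-3/4 \<le> x$1" "x$1 \<le> 5/4" "-3/4 \<le> x$2" "x$2 \<le> 5/4"
      using xX unfolding X_set_def by auto
    have yb: "-10 \<le> y$1" "y$1 \<le> 10" "-10 \<le> y$2" "y$2 \<le> 10"
      using yY unfolding Y_set_def by auto
    have cg: "0 \<le> Gx$1*(5/4 - x$1)" "0 \<le> Gx$1*(-3/4 - x$1)"
      "0 \<le> Gx$2*(5/4 - x$2)" "0 \<le> Gx$2*(-3/4 - x$2)"
      using bX by auto
    have ch: "Gy$1*(10 - y$1) \<le> 0" "Gy$1*(-10 - y$1) \<le> 0"
      "Gy$2*(10 - y$2) \<le> 0" "Gy$2*(-10 - y$2) \<le> 0"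
      using bY by auto
    have res: "x$1 = -3/4 \<and> x$2 = -3/4 \<and> y$1 = Yv \<and> y$2 = Yv"
      using scalar_core[OF r xb yb refl sdef Gx1 Gx2 Gy1 Gy2 cg ch] unfolding Yv_def by simp
    show "x = (-(3/4)) *\<^sub>R e_vec \<and> y = ((10 + 18 * \<rho>) / (16 + 32 * \<rho>)) *\<^sub>R e_vec"
      using res unfolding Yv_def by (simp add: vec_eq_iff forall_2 e_comp)
  next
    assume "x = (-(3/4)) *\<^sub>R e_vec \<and> y = ((10 + 18 * \<rho>) / (16 + 32 * \<rho>)) *\<^sub>R e_vec"
    then have xy: "x = (-(3/4)) *\<^sub>R e_vec" "y = Yv *\<^sub>R e_vec" unfolding Yv_def by simp_all
    have c: "x$1 = -3/4" "x$2 = -3/4" "y$1 = Yv" "y$2 = Yv" using xy by (simp_all add: e_comp)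
    have Yv0: "Yv > 0" unfolding Yv_def using r by simp
    have "2*Yv - 9/8 = 1/(8 + 16*\<rho>)" unfolding Yv_def using r by (simp add: field_simps)
    then have sv: "s = 1/(8 + 16*\<rho>)" using sdef c r by (simp add: pos_part_def)
    then have rs: "\<rho> * s = \<rho>/(8 + 16*\<rho>)" by simp
    have rs2: "\<rho> * s < 1/16" unfolding rs using r by (simp add: field_simps)
    have rs0: "\<rho> * s \<ge> 0" unfolding rs using r by simp
    define g where "g = (9/8 - 2 + 2*(\<rho> * s))*(-3/4) + Yv/2"
    have gpos: "g > 0" unfolding g_def using rs2 Yv0 by (simp add: field_simps)
    have g12: "Gx$1 = g" "Gx$2 = g" unfolding Gx1 Gx2 g_def c by (simp_all add: algebra_simps)
    have "5/8 - Yv - \<rho>/(8 + 16*\<rho>) = 0" unfolding Yv_def using r by (simp add: field_simps)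
    then have "Gy$1 = 0" "Gy$2 = 0" unfolding Gy1 Gy2 c rs by (simp_all add: field_simps)
    then have Gy0: "Gy = 0" by (simp add: vec_eq_iff forall_2)
    have xX: "x \<in> X_set" using c unfolding X_set_def by (simp add: forall_2)
    have Yv1: "Yv < 1" unfolding Yv_def using r by (simp add: divide_less_eq)
    have yY: "y \<in> Y_set" using c Yv0 Yv1 unfolding Y_set_def by (simp add: forall_2)
    have nX: "- Gx \<in> normal_cone X_set x"
      unfolding normal_cone_def
    proof (clarify)
      fix z assume "z \<in> X_set"
      then have "z$1 \<ge> -3/4" "z$2 \<ge> -3/4" unfolding X_set_def by auto
      then have "g*(z$1 + 3/4) \<ge> 0" "g*(z$2 + 3/4) \<ge> 0" using gpos by simp_all
      then show "inner (- Gx) (z - x) \<le> 0" by (simp add: comp_inner g12 c)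
    qed
    have nY: "Gy \<in> normal_cone Y_set y" unfolding normal_cone_def Gy0 by simp
    show "minimax_stationary \<rho> x y"
    proof -
      have e1: "\<exists>v\<in>normal_cone X_set x. Gx + v = 0" using nX by (intro bexI[of _ "- Gx"]) simp_all
      have e2: "\<exists>w\<in>normal_cone Y_set y. - Gy + w = 0" using nY by (intro bexI[of _ Gy]) simp_all
      show ?thesis using xX yY gX gY e1 e2 unfolding minimax_stationary_def by blast
    qed
  qed
qed

theorem lemma4p1:
  shows "(\<forall>\<rho>>1. {(x, y). minimax_stationary \<rho> x y} =
            {((-(3/4)) *\<^sub>R e_vec, ((10 + 18 * \<rho>) / (16 + 32 * \<rho>)) *\<^sub>R e_vec)})
       \<and> ((\<lambda>\<rho>. ((-(3/4)) *\<^sub>R e_vec, ((10 + 18 * \<rho>) / (16 + 32 * \<rho>)) *\<^sub>R e_vec))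
            \<longlongrightarrow> ((-(3/4)) *\<^sub>R e_vec, (9/16) *\<^sub>R e_vec)) at_top"
proof
  show "\<forall>\<rho>>1. {(x, y). minimax_stationary \<rho> x y} =
            {((-(3/4)) *\<^sub>R e_vec, ((10 + 18 * \<rho>) / (16 + 32 * \<rho>)) *\<^sub>R e_vec)}"
    using stationary_iff by auto
  have lim: "((\<lambda>\<rho>::real. (10 + 18 * \<rho>) / (16 + 32 * \<rho>)) \<longlongrightarrow> 9/16) at_top"
    by real_asymp
  show "((\<lambda>\<rho>. ((-(3/4)) *\<^sub>R e_vec, ((10 + 18 * \<rho>) / (16 + 32 * \<rho>)) *\<^sub>R e_vec))
            \<longlongrightarrow> ((-(3/4)) *\<^sub>R e_vec, (9/16) *\<^sub>R e_vec)) at_top"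
    by (rule tendsto_Pair[OF tendsto_const tendsto_scaleR[OF lim tendsto_const]])
qed


end
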